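(* Let $p=\sum_{i=0}^n c_ix^i$ be a polynomial with coefficients $c_i$ in the signed tropical hyperfield $\mathbb{T}\mathbb{R}$, and let $a=(+1,r)\in\mathbb{T}\mathbb{R}$ (with $r\in\mathbb{R}$) be a root of $p$. Then \[ \operatorname{mult}_a(p)=\Delta\big(\operatorname{In}^{(r)}(p)\big), \] where $\operatorname{In}^{(r)}(p)=\sum\{\operatorname{sign}(c_i)x^i : |c_i|+ir=C\}\in\mathbf{S}[x]$ with $C=\min_i(|c_i|+ir)$, and $\Delta$ denotes the number of sign changes in the sequence of coefficients, ignoring zeros.
   Context: The signed tropical hyperfield $\mathbb{T}\mathbb{R}$ has underlying set $(\{\pm1\}\times\mathbb{R})\cup\{\infty\}$. Multiplication: $(s,r)\cdot(s',r')=(ss',r+r')$, $\infty\cdot x=\infty$; the unit is $(+1,0)$ and the zero is $\infty$. For $x=(s,r)$ write $\operatorname{sign}(x)=s$, $|x|=r$, and $\operatorname{sign}(\infty)=0$, $|\infty|=\infty$; also $-(s,r)=(-s,r)$. Hyperaddition: $x\boxplus\infty=\{x\}$, and $(s,r)\boxplus(s',r')$ equals $\{(s,r)\}$ if $r<r'$, $\{(s',r')\}$ if $r'<r$, $\{(s,r)\}$ if $r=r'$ and $s=s'$, and $\{(\pm1,t):t\ge r\}\cup\{\infty\}$ if $r=r'$ and $s=-s'$; iterated sums are defined by $a_1\boxplus\cdots\boxplus a_n=\bigcup_{b\in a_1\boxplus\cdots\boxplus a_{n-1}} b\boxplus a_n$. The element $a$ is positive if its sign is $+1$. The sign hyperfield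 $\mathbf{S}=\{0,1,-1\}$ has the usual multiplication, $0\boxplus x=\{x\}$, $1\boxplus1=\{1\}$, $-1\boxplus-1=\{-1\}$, $1\boxplus-1=\{0,1,-1\}$. For a polynomial $p=\sum_{i=0}^n c_ix^i$ over a hyperfield $H$ and $a\in H$: $a$ is a root of $p$ (written $0\in p(a)$) if $0\in\boxplus_{i=0}^n c_ia^i$. Write $p\in(x-a)q$ for $q=\sum_{i=0}^{n-1}d_ix^i$ if $c_0=-ad_0$, $c_i\in(-ad_i)\boxplus d_{i-1}$ for $1\le i\le n-1$, and $c_n=d_{n-1}$. The multiplicity is defined recursively: $\operatorname{mult}_a(p)=0$ if $0\notin p(a)$, and $\operatorname{mult}_a(p)=1+\max\{\operatorname{mult}_a(q):p\in(x-a)q\}$ if $0\in p(a)$. *)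

theory Defs
  imports Main "HOL.Real"
begin

text \<open>TInf is the zero element infinity; TR s r is the element (s, r), where the
  boolean s encodes the sign: True = +1, False = -1.\<close>
datatype tr = TInf | TR bool real

definition tone :: tr where "tone = TR True 0"

fun tmul :: "tr \<Rightarrow> tr \<Rightarrow> tr" where
  "tmul TInf _ = TInf"
| "tmul _ TInf = TInf"
| "tmul (TR s r) (TR s' r') = TR (s = s') (r + r')"

fun tneg :: "tr \<Rightarrow> tr" where
  "tneg TInf = TInf"
| "tneg (TR s r) = TR (\<not> s) r"

fun tsign :: "tr \<Rightarrow> int" where
  "tsign TInf = 0"
| "tsign (TR s r) = (if s then 1 else -1)"

fun hadd :: "tr \<Rightarrow> tr \<Rightarrow> tr set" where
  "hadd x TInf = {x}"
| "hadd TInf y = {y}"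
| "hadd (TR s r) (TR s' r') =
     (if r < r' then {TR s r}
      else if r' < r then {TR s' r'}
      else if s = s' then {TR s r}
      else {TR b t | b t. t \<ge> r} \<union> {TInf})"

text \<open>Iterated hypersum a_1 \<boxplus> ... \<boxplus> a_n, left-associated as in the paper
  (the empty sum is {TInf}, and TInf \<boxplus> a_1 = {a_1}).\<close>
definition hsum :: "tr list \<Rightarrow> tr set" where
  "hsum xs = foldl (\<lambda>S x. \<Union>b\<in>S. hadd b x) {TInf} xs"

definition tpow :: "tr \<Rightarrow> nat \<Rightarrow> tr" where
  "tpow a i = (tmul a ^^ i) tone"

definition peval :: "tr list \<Rightarrow> tr \<Rightarrow> tr set" where
  "peval cs a = hsum (map (\<lambda>i. tmul (cs ! i) (tpow a i)) [0..<length cs])"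

definition is_root :: "tr list \<Rightarrow> tr \<Rightarrow> bool" where
  "is_root cs a \<longleftrightarrow> TInf \<in> peval cs a"

text \<open>p \<in> (x - a) q, for p = cs (degree n) and q = ds (length n)\<close>
definition in_lin_mult :: "tr list \<Rightarrow> tr \<Rightarrow> tr list \<Rightarrow> bool" where
  "in_lin_mult cs a ds \<longleftrightarrow>
     (let n = length ds in
        n \<ge> 1 \<and> length cs = n + 1 \<and>
        cs ! 0 = tneg (tmul a (ds ! 0)) \<and>
        (\<forall>i. 1 \<le> i \<and> i \<le> n - 1 \<longrightarrow> cs ! i \<in> hadd (tneg (tmul a (ds ! i))) (ds ! (i - 1))) \<and>
        cs ! n = ds ! (n - 1))"

text \<open>Multiplicity, defined by recursion on a fuel parameter equal to the length
  of the coefficient list (each division step decreases the length by one).\<close>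
fun mult_aux :: "nat \<Rightarrow> tr \<Rightarrow> tr list \<Rightarrow> nat" where
  "mult_aux 0 a cs = 0"
| "mult_aux (Suc k) a cs =
     (if \<not> is_root cs a then 0
      else Suc (Max (mult_aux k a ` {ds. in_lin_mult cs a ds})))"

definition mult :: "tr \<Rightarrow> tr list \<Rightarrow> nat" where
  "mult a cs = mult_aux (length cs) a cs"

text \<open>valuation of the i-th term at r: |c_i| + i r (None encodes infinity)\<close>
definition term_val :: "tr list \<Rightarrow> real \<Rightarrow> nat \<Rightarrow> real option" where
  "term_val cs r i = (case cs ! i of TInf \<Rightarrow> None | TR s m \<Rightarrow> Some (m + real i * r))"

text \<open>C = min_i (|c_i| + i r), over the finite terms (the leading coefficient is
  assumed nonzero in the theorem, so this set is nonempty).\<close>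
definition min_val :: "tr list \<Rightarrow> real \<Rightarrow> real" where
  "min_val cs r = Min {v. \<exists>i<length cs. term_val cs r i = Some v}"

text \<open>In^(r)(p), as a coefficient list in the sign hyperfield S = {0,1,-1}\<close>
definition initial_form :: "real \<Rightarrow> tr list \<Rightarrow> int list" where
  "initial_form r cs =
     map (\<lambda>i. if term_val cs r i = Some (min_val cs r) then tsign (cs ! i) else 0)
         [0..<length cs]"

fun sign_changes_nz :: "int list \<Rightarrow> nat" where
  "sign_changes_nz (x # y # zs) = (if x \<noteq> y then 1 else 0) + sign_changes_nz (y # zs)"
| "sign_changes_nz _ = 0"

definition sign_changes :: "int list \<Rightarrow> nat" where
  "sign_changes xs = sign_changes_nz (filter (\<lambda>x. x \<noteq> 0) xs)"

end

theory Submission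
  imports Defs
begin
definition sadd :: "int \<Rightarrow> int \<Rightarrow> int set" where
  "sadd x y = (if x = 0 then {y} else if y = 0 then {x} else if x = y then {x} else {-1,0,1})"

fun scf :: "int \<Rightarrow> int list \<Rightarrow> nat" where
  "scf s [] = 0"
| "scf s (x#xs) = (if x = 0 then scf s xs else (if s \<noteq> 0 \<and> x \<noteq> s then 1 else 0) + scf x xs)"

fun lastnz :: "int \<Rightarrow> int list \<Rightarrow> int" where
  "lastnz s [] = s"
| "lastnz s (x#xs) = lastnz (if x = 0 then s else x) xs"

lemma scf_nz: "s \<noteq> 0 \<Longrightarrow> sign_changes_nz (s # filter (\<lambda>x. x \<noteq> 0) xs) = scf s xs"
  by (induction xs arbitrary: s) auto

lemma sign_changes_scf: "sign_changes xs = scf 0 xs"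
proof (induction xs)
  case Nil then show ?case by (simp add: sign_changes_def)
next
  case (Cons x xs) then show ?case
    by (auto simp: sign_changes_def scf_nz)
qed

lemma scf_append: "scf s (xs @ ys) = scf s xs + scf (lastnz s xs) ys"
  by (induction xs arbitrary: s) auto

fun relS :: "int \<Rightarrow> int list \<Rightarrow> int list \<Rightarrow> bool" where
  "relS z [] ps = (ps = [z])"
| "relS z (q#qs) ps = (case ps of [] \<Rightarrow> False | p#ps' \<Rightarrow> p \<in> sadd (-q) z \<and> relS q qs ps')"

lemma relS_scf:
  "relS z qs ps \<Longrightarrow> set qs \<subseteq> {-1,0,1} \<Longrightarrow> set ps \<subseteq> {-1,0,1} \<Longrightarrow>
   s \<in> {-1,0,1} \<Longrightarrow> t \<in> {-1,0,1} \<Longrightarrow> z \<in> {0,t} \<Longrightarrow> (t = 0 \<longleftrightarrow> s = 0) \<Longrightarrow>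
   (t \<noteq> 0 \<and> z = 0 \<longrightarrow> s = t) \<Longrightarrow> (t \<noteq> 0 \<or> (\<exists>q\<in>set qs. q \<noteq> 0)) \<Longrightarrow>
   scf t qs + 1 \<le> scf s ps + (if s = t \<and> t \<noteq> 0 then 1 else 0)"
proof (induction qs arbitrary: z s t ps)
  case Nil
  then show ?case by auto
next
  case (Cons q qs)
  from Cons.prems(1) obtain p ps' where ps: "ps = p # ps'" and pq: "p \<in> sadd (-q) z"
    and r: "relS q qs ps'" by (cases ps) auto
  define t' where "t' = (if q = 0 then t else q)"
  define s' where "s' = (if p = 0 then s else p)"
  have IH: "scf t' qs + 1 \<le> scf s' ps' + (if s' = t' \<and> t' \<noteq> 0 then 1 else 0)"
  proof (rule Cons.IH[OF r])
    show "set qs \<subseteq> {-1,0,1}" using Cons.prems by auto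
    show "set ps' \<subseteq> {-1,0,1}" using Cons.prems ps by auto
    show "s' \<in> {-1,0,1}" using Cons.prems ps s'_def by auto
    show "t' \<in> {-1,0,1}" using Cons.prems t'_def by auto
    show "q \<in> {0,t'}" using t'_def by auto
    show "(t' = 0 \<longleftrightarrow> s' = 0)" using Cons.prems pq t'_def s'_def by (auto simp: sadd_def split: if_splits)
    show "(t' \<noteq> 0 \<and> q = 0 \<longrightarrow> s' = t')" using Cons.prems pq t'_def s'_def by (auto simp: sadd_def split: if_splits)
    show "t' \<noteq> 0 \<or> (\<exists>q\<in>set qs. q \<noteq> 0)" using Cons.prems t'_def by auto
  qed
  have q3: "q \<in> {-1,0,1}" "p \<in> {-1,0,1}" using Cons.prems ps by auto
  have st: "s \<in> {-1,0,1}" "t \<in> {-1,0,1}" "z \<in> {0,t}" "(t = 0 \<longleftrightarrow> s = 0)" "(t \<noteq> 0 \<and> z = 0 \<longrightarrow> s = t)"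
    using Cons.prems by auto
  from q3 st pq IH show ?case unfolding ps t'_def s'_def
    apply (simp only: insert_iff singleton_iff empty_iff simp_thms)
    apply (elim disjE)
    apply (simp_all add: sadd_def)
    done
qed

fun tsc :: "tr \<Rightarrow> real \<Rightarrow> tr" where
  "tsc TInf k = TInf"
| "tsc (TR s v) k = TR s (v + k)"

fun vge :: "real \<Rightarrow> tr \<Rightarrow> bool" where
  "vge m TInf = True"
| "vge m (TR s v) = (m \<le> v)"

fun vgt :: "real \<Rightarrow> tr \<Rightarrow> bool" where
  "vgt m TInf = True"
| "vgt m (TR s v) = (m < v)"

fun sgl :: "real \<Rightarrow> tr \<Rightarrow> int" where
  "sgl m TInf = 0"
| "sgl m (TR s v) = (if v = m then (if s then 1 else -1) else 0)"

fun tle :: "tr \<Rightarrow> tr \<Rightarrow> bool" where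
  "tle _ TInf = True"
| "tle TInf (TR _ _) = False"
| "tle (TR _ v) (TR _ w) = (v \<le> w)"

lemma tmul_one_left: "tmul (TR True k) x = tsc x k"
  by (cases x) auto
lemma tmul_one_right: "tmul x (TR True k) = tsc x k"
  by (cases x) auto
lemma tpow_one: "tpow (TR True r) i = TR True (real i * r)"
  by (induction i) (auto simp: tpow_def tone_def algebra_simps)
lemma tsc_tsc[simp]: "tsc (tsc x a) b = tsc x (a + b)"
  by (cases x) auto
lemma tsc_0[simp]: "tsc x 0 = x"
  by (cases x) auto
lemma tneg_tsc[simp]: "tneg (tsc x k) = tsc (tneg x) k"
  by (cases x) auto
lemma tneg_tneg[simp]: "tneg (tneg x) = x"
  by (cases x) auto
lemma vge_tsc[simp]: "vge m (tsc x k) = vge (m - k) x"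
  by (cases x) auto
lemma vgt_tsc[simp]: "vgt m (tsc x k) = vgt (m - k) x"
  by (cases x) auto
lemma sgl_tsc[simp]: "sgl m (tsc x k) = sgl (m - k) x"
  by (cases x) auto
lemma vge_tneg[simp]: "vge m (tneg x) = vge m x"
  by (cases x) auto
lemma vgt_tneg[simp]: "vgt m (tneg x) = vgt m x"
  by (cases x) auto
lemma sgl_tneg[simp]: "sgl m (tneg x) = - sgl m x"
  by (cases x) auto
lemma sgl_range: "sgl m x \<in> {-1,0,1}"
  by (cases x) auto
lemma tsc_inf_iff[simp]: "(tsc x k = TInf) = (x = TInf)"
  by (cases x) auto

lemma hadd_comm: "hadd x y = hadd y x"
  by (cases x; cases y) auto

lemma hadd_tsc: "hadd (tsc x k) (tsc y k) = (\<lambda>z. tsc z k) ` hadd x y"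
proof (cases x; cases y)
  fix s v s' v' assume x: "x = TR s v" and y: "y = TR s' v'"
  show ?thesis
  proof (cases "v = v' \<and> s \<noteq> s'")
    case True
    have "{TR b t |b t. v + k \<le> t} = (\<lambda>z. tsc z k) ` {TR b t |b t. v \<le> t}"
    proof (rule set_eqI, rule iffI)
      fix z assume "z \<in> {TR b t |b t. v + k \<le> t}"
      then obtain b t where "z = TR b t" "v + k \<le> t" by auto
      then show "z \<in> (\<lambda>z. tsc z k) ` {TR b t |b t. v \<le> t}"
        by (intro image_eqI[where x="TR b (t - k)"]) auto
    qed auto
    then show ?thesis using True x y by auto
  next
    case False
    then show ?thesis using x y by auto
  qed
qed auto

lemma hadd_vge: "vge m x \<Longrightarrow> vge m y \<Longrightarrow> z \<in> hadd x y \<Longrightarrow> vge m z \<and> sgl m z \<in> sadd (sgl m x) (sgl m y)"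
  by (cases x; cases y; cases z) (auto simp: sadd_def split: if_splits)

lemma hadd_vgt: "vgt m x \<Longrightarrow> vgt m y \<Longrightarrow> z \<in> hadd x y \<Longrightarrow> vgt m z"
  by (cases x; cases y; cases z) (auto split: if_splits)

lemma hadd_ne: "hadd x y \<noteq> {}"
  by (cases x; cases y) auto

lemma hadd_self_le: "tle x y \<Longrightarrow> x \<in> hadd x y"
  by (cases x; cases y) auto

lemma hadd_cancel: "y \<noteq> TInf \<Longrightarrow> tle y z \<Longrightarrow> z \<in> hadd (tneg y) y"
  by (cases y; cases z) auto

lemma hsum_snoc: "hsum (xs @ [x]) = (\<Union>b\<in>hsum xs. hadd b x)"
  by (simp add: hsum_def)

lemma hsum_ne: "hsum xs \<noteq> {}"
  by (induction xs rule: rev_induct) (auto simp: hsum_def hadd_ne)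

lemma vge_not_lvl: "vge m y \<Longrightarrow> y \<noteq> TR True m \<Longrightarrow> y \<noteq> TR False m \<Longrightarrow> vgt m y"
  by (cases y) auto

lemma full_step:
  assumes a: "vge m x" "vge m z" shows "\<exists>b'. vge m b' \<and> z \<in> hadd b' x"
proof (cases x)
  case TInf then show ?thesis using a by (intro exI[of _ z]) (cases z; auto)
next
  case (TR s v)
  show ?thesis
  proof (cases z)
    case TInf then show ?thesis using a TR by (intro exI[of _ "TR (\<not>s) v"]) auto
  next
    case (TR s' w)
    show ?thesis
    proof (cases "w < v")
      case True then show ?thesis using a TR \<open>x = _\<close> by (intro exI[of _ z]) auto
    next
      case False then show ?thesis using a TR \<open>x = _\<close> by (intro exI[of _ "TR (\<not>s) v"]) auto
    qed
  qed
qed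

lemma hsum_char:
  "(\<forall>x\<in>set xs. vge m x) \<Longrightarrow>
   ((\<forall>x\<in>set xs. vgt m x) \<longrightarrow> (\<forall>z\<in>hsum xs. vgt m z)) \<and>
   (\<forall>b. TR b m \<in> set xs \<and> TR (\<not>b) m \<notin> set xs \<longrightarrow> hsum xs = {TR b m}) \<and>
   (TR True m \<in> set xs \<and> TR False m \<in> set xs \<longrightarrow> {z. vge m z} \<subseteq> hsum xs)"
proof (induction xs rule: rev_induct)
  case Nil
  then show ?case by (auto simp: hsum_def)
next
  case (snoc x xs)
  have vx: "vge m x" and vxs: "\<forall>y\<in>set xs. vge m y" using snoc.prems by auto
  note IH = snoc.IH[OF vxs]
  have new: "hsum (xs @ [x]) = (\<Union>b\<in>hsum xs. hadd b x)" by (rule hsum_snoc)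
  have P1: "(\<forall>y\<in>set (xs@[x]). vgt m y) \<longrightarrow> (\<forall>z\<in>hsum (xs@[x]). vgt m z)"
  proof (intro impI ballI)
    fix z assume a: "\<forall>y\<in>set (xs@[x]). vgt m y" and z: "z \<in> hsum (xs@[x])"
    then have "\<forall>z\<in>hsum xs. vgt m z" using IH by simp
    moreover from z new obtain b where "b \<in> hsum xs" "z \<in> hadd b x" by auto
    moreover have "vgt m x" using a by simp
    ultimately show "vgt m z" using hadd_vgt by blast
  qed
  have P2: "TR b m \<in> set (xs@[x]) \<and> TR (\<not>b) m \<notin> set (xs@[x]) \<longrightarrow> hsum (xs@[x]) = {TR b m}" for b
  proof
    assume h: "TR b m \<in> set (xs@[x]) \<and> TR (\<not>b) m \<notin> set (xs@[x])"
    show "hsum (xs@[x]) = {TR b m}"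
    proof (cases "TR b m \<in> set xs")
      case True
      then have H: "hsum xs = {TR b m}" using IH h by auto
      have "hadd (TR b m) x = {TR b m}" using vx h by (cases x) auto
      then show ?thesis using new H by simp
    next
      case False
      then have xe: "x = TR b m" using h by auto
      have "\<forall>y\<in>set xs. vgt m y"
      proof
        fix y assume y: "y \<in> set xs"
        have "y \<noteq> TR True m" "y \<noteq> TR False m" using y h False by (cases b; auto)+
        then show "vgt m y" using vxs y vge_not_lvl by blast
      qed
      then have "\<forall>z\<in>hsum xs. vgt m z" using IH by auto
      then have "\<forall>z\<in>hsum xs. hadd z x = {x}" using xe
        by (metis hadd.simps(2) hadd.simps(3) vgt.elims(2) not_less_iff_gr_or_eq)
      then show ?thesis using new xe hsum_ne[of xs] by auto
    qed
  qed
  have P3: "TR True m \<in> set (xs@[x]) \<and> TR False m \<in> set (xs@[x]) \<longrightarrow> {z. vge m z} \<subseteq> hsum (xs@[x])"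
  proof
    assume h: "TR True m \<in> set (xs@[x]) \<and> TR False m \<in> set (xs@[x])"
    show "{z. vge m z} \<subseteq> hsum (xs@[x])"
    proof (cases "TR True m \<in> set xs \<and> TR False m \<in> set xs")
      case True
      then have H: "{z. vge m z} \<subseteq> hsum xs" using IH by auto
      show ?thesis
      proof
        fix z assume "z \<in> {z. vge m z}"
        then obtain b' where "vge m b'" "z \<in> hadd b' x" using full_step[OF vx] by blast
        then show "z \<in> hsum (xs@[x])" using H new by auto
      qed
    next
      case False
      then obtain c where c: "TR c m \<in> set xs" "TR (\<not>c) m \<notin> set xs" "x = TR (\<not>c) m"
        using h by (cases "TR True m \<in> set xs") auto
      then have H: "hsum xs = {TR c m}" using IH by auto
      have "{z. vge m z} \<subseteq> hadd (TR c m) x"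
      proof
        fix z assume "z \<in> {z. vge m z}"
        then show "z \<in> hadd (TR c m) x" using c(3) by (cases z) auto
      qed
      then show ?thesis using new H by auto
    qed
  qed
  show ?case using P1 P2 P3 by blast
qed

definition T :: "tr list \<Rightarrow> real \<Rightarrow> nat \<Rightarrow> tr" where
  "T cs r i = tsc (cs ! i) (real i * r)"

lemma peval_T: "peval cs (TR True r) = hsum (map (T cs r) [0..<length cs])"
  unfolding peval_def T_def by (simp add: tpow_one tmul_one_right)

lemma term_val_T: "term_val cs r i = (case T cs r i of TInf \<Rightarrow> None | TR s v \<Rightarrow> Some v)"
  unfolding term_val_def T_def by (cases "cs ! i") auto

lemma sgl_ne0: "(sgl m x \<noteq> 0) = (\<exists>b. x = TR b m)"
  by (cases x) auto

lemma min_val_props: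
  assumes "\<exists>i<length cs. cs ! i \<noteq> TInf"
  shows "(\<forall>i<length cs. vge (min_val cs r) (T cs r i)) \<and> (\<exists>i<length cs. sgl (min_val cs r) (T cs r i) \<noteq> 0)"
proof -
  define V where "V = {v. \<exists>i<length cs. term_val cs r i = Some v}"
  have fin: "finite V"
  proof -
    have "V \<subseteq> (\<lambda>i. the (term_val cs r i)) ` {..<length cs}" unfolding V_def by force
    then show ?thesis by (rule finite_subset) auto
  qed
  obtain i where i: "i < length cs" "cs ! i \<noteq> TInf" using assms by auto
  then obtain s v where "cs ! i = TR s v" by (cases "cs ! i") auto
  then have "v + real i * r \<in> V" using i unfolding V_def term_val_def by auto
  then have ne: "V \<noteq> {}" by auto
  have mv: "min_val cs r = Min V" unfolding min_val_def V_def by simp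
  have A: "\<forall>i<length cs. vge (min_val cs r) (T cs r i)"
  proof (intro allI impI)
    fix j assume j: "j < length cs"
    show "vge (min_val cs r) (T cs r j)"
    proof (cases "T cs r j")
      case (TR s w)
      then have "w \<in> V" using j unfolding V_def by (auto simp: term_val_T)
      then show ?thesis using TR mv fin by simp
    qed simp
  qed
  have "Min V \<in> V" using fin ne by simp
  then obtain j where j: "j < length cs" "term_val cs r j = Some (Min V)" unfolding V_def by auto
  then obtain s where "T cs r j = TR s (Min V)" by (cases "T cs r j") (auto simp: term_val_T)
  then have "sgl (min_val cs r) (T cs r j) \<noteq> 0" using mv by simp
  with A j show ?thesis by blast
qed

lemma exists_level:
  assumes "\<exists>i<length cs. cs ! i \<noteq> TInf"
  shows "\<exists>m. (\<forall>i<length cs. vge m (T cs r i)) \<and> (\<exists>i<length cs. sgl m (T cs r i) \<noteq> 0)"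
  using min_val_props[OF assms] by blast

lemma init_eq:
  assumes a: "\<forall>i<length cs. vge m (T cs r i)" and b: "\<exists>i<length cs. sgl m (T cs r i) \<noteq> 0"
  shows "initial_form r cs = map (\<lambda>i. sgl m (T cs r i)) [0..<length cs]"
proof -
  define V where "V = {v. \<exists>i<length cs. term_val cs r i = Some v}"
  have fin: "finite V"
  proof -
    have "V \<subseteq> (\<lambda>i. the (term_val cs r i)) ` {..<length cs}" unfolding V_def by force
    then show ?thesis by (rule finite_subset) auto
  qed
  obtain i where i: "i < length cs" "sgl m (T cs r i) \<noteq> 0" using b by auto
  then obtain s where "T cs r i = TR s m" using sgl_ne0 by blast
  then have mV: "m \<in> V" using i unfolding V_def by (auto simp: term_val_T)
  have lb: "\<forall>v\<in>V. m \<le> v"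
  proof
    fix v assume "v \<in> V"
    then obtain j where j: "j < length cs" "term_val cs r j = Some v" unfolding V_def by auto
    then show "m \<le> v" using a by (cases "T cs r j") (auto simp: term_val_T)
  qed
  have mv: "min_val cs r = m" unfolding min_val_def V_def[symmetric]
    using fin mV lb by (intro Min_eqI) auto
  show ?thesis unfolding initial_form_def mv
  proof (rule map_cong[OF refl])
    fix j assume "j \<in> set [0..<length cs]"
    show "(if term_val cs r j = Some m then tsign (cs ! j) else 0) = sgl m (T cs r j)"
      unfolding term_val_T by (cases "cs ! j") (auto simp: T_def)
  qed
qed

lemma root_iff:
  assumes a: "\<forall>i<length cs. vge m (T cs r i)" and b: "\<exists>i<length cs. sgl m (T cs r i) \<noteq> 0"
  shows "is_root cs (TR True r) \<longleftrightarrow> (1 \<in> set (map (\<lambda>i. sgl m (T cs r i)) [0..<length cs]) \<and>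
                                    -1 \<in> set (map (\<lambda>i. sgl m (T cs r i)) [0..<length cs]))"
proof -
  let ?xs = "map (T cs r) [0..<length cs]"
  have v: "\<forall>x\<in>set ?xs. vge m x" using a by auto
  note H = hsum_char[OF v]
  have e1: "(TR True m \<in> set ?xs) = (1 \<in> set (map (\<lambda>i. sgl m (T cs r i)) [0..<length cs]))"
  proof
    assume "TR True m \<in> set ?xs" then obtain i where "i < length cs" "T cs r i = TR True m" by auto
    then show "1 \<in> set (map (\<lambda>i. sgl m (T cs r i)) [0..<length cs])" by force
  next
    assume "1 \<in> set (map (\<lambda>i. sgl m (T cs r i)) [0..<length cs])"
    then obtain i where "i < length cs" "sgl m (T cs r i) = 1" by auto
    then have "T cs r i = TR True m" by (cases "T cs r i") (auto split: if_splits)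
    then show "TR True m \<in> set ?xs" using \<open>i < _\<close> by force
  qed
  have e2: "(TR False m \<in> set ?xs) = (-1 \<in> set (map (\<lambda>i. sgl m (T cs r i)) [0..<length cs]))"
  proof
    assume "TR False m \<in> set ?xs" then obtain i where "i < length cs" "T cs r i = TR False m" by auto
    then show "-1 \<in> set (map (\<lambda>i. sgl m (T cs r i)) [0..<length cs])" by force
  next
    assume "-1 \<in> set (map (\<lambda>i. sgl m (T cs r i)) [0..<length cs])"
    then obtain i where "i < length cs" "sgl m (T cs r i) = -1" by auto
    then have "T cs r i = TR False m" by (cases "T cs r i") (auto split: if_splits)
    then show "TR False m \<in> set ?xs" using \<open>i < _\<close> by force
  qed
  obtain i b0 where i: "i < length cs" "T cs r i = TR b0 m" using b sgl_ne0 by blast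
  then have inb: "TR b0 m \<in> set ?xs" by force
  show ?thesis
  proof
    assume rt: "is_root cs (TR True r)"
    have "TInf \<in> hsum ?xs" using rt unfolding is_root_def peval_T .
    then have "TR (\<not>b0) m \<in> set ?xs" using H inb by fastforce
    then have "TR True m \<in> set ?xs \<and> TR False m \<in> set ?xs" using inb by (cases b0) auto
    then show "1 \<in> set (map (\<lambda>i. sgl m (T cs r i)) [0..<length cs]) \<and>
               -1 \<in> set (map (\<lambda>i. sgl m (T cs r i)) [0..<length cs])" using e1 e2 by blast
  next
    assume "1 \<in> set (map (\<lambda>i. sgl m (T cs r i)) [0..<length cs]) \<and>
               -1 \<in> set (map (\<lambda>i. sgl m (T cs r i)) [0..<length cs])"
    then have "TR True m \<in> set ?xs \<and> TR False m \<in> set ?xs" using e1 e2 by blast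
    moreover have "TInf \<in> {z. vge m z}" by simp
    ultimately have "TInf \<in> hsum ?xs" using H by blast
    then show "is_root cs (TR True r)" unfolding is_root_def peval_T .
  qed
qed

lemma scf_const: "set xs \<subseteq> {0,s} \<Longrightarrow> s' \<in> {0,s} \<Longrightarrow> scf s' xs = 0"
  by (induction xs arbitrary: s') auto

lemma scf_notboth:
  assumes "set xs \<subseteq> {-1,0,1}" "\<not> (1 \<in> set xs \<and> -1 \<in> set xs)"
  shows "scf 0 xs = 0"
proof (cases "1 \<in> set xs")
  case True
  then have "set xs \<subseteq> {0,1}" using assms by auto
  then show ?thesis by (rule scf_const) auto
next
  case False
  then have "set xs \<subseteq> {0,-1}" using assms by auto
  then show ?thesis by (rule scf_const) auto
qed

lemma scf_pos_nz: "0 < scf 0 xs \<Longrightarrow> \<exists>x\<in>set xs. x \<noteq> 0"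
  using scf_const[of xs 0 0] by auto

lemma relS_idx:
  "length ps = length qs + 1 \<Longrightarrow> (\<forall>i \<le> length qs. ps ! i \<in> sadd (- ((qs @ [0]) ! i)) ((z # qs) ! i))
   \<Longrightarrow> relS z qs ps"
proof (induction qs arbitrary: z ps)
  case Nil
  then show ?case by (cases ps) (auto simp: sadd_def)
next
  case (Cons q qs)
  then obtain p ps' where ps: "ps = p # ps'" by (cases ps) auto
  have "p \<in> sadd (-q) z" using Cons.prems(2)[rule_format, of 0] ps by simp
  moreover have "relS q qs ps'"
  proof (rule Cons.IH)
    show "length ps' = length qs + 1" using Cons.prems ps by simp
    show "\<forall>i\<le>length qs. ps' ! i \<in> sadd (- ((qs @ [0]) ! i)) ((q # qs) ! i)"
    proof (intro allI impI)
      fix i assume "i \<le> length qs"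
      then show "ps' ! i \<in> sadd (- ((qs @ [0]) ! i)) ((q # qs) ! i)"
        using Cons.prems(2)[rule_format, of "Suc i"] ps by simp
    qed
  qed
  ultimately show ?case using ps by simp
qed

lemma hadd_TInf_left[simp]: "hadd TInf y = {y}"
  by (cases y) auto

lemma dir_a:
  assumes lm: "in_lin_mult cs (TR True r) ds" and lc: "last cs \<noteq> TInf"
  shows "sign_changes (initial_form r ds) + 1 \<le> sign_changes (initial_form r cs)"
proof -
  define n where "n = length ds"
  from lm have n1: "n \<ge> 1" and lcs: "length cs = n + 1"
    and c0: "cs!0 = tneg (tmul (TR True r) (ds!0))"
    and cm: "\<forall>i. 1 \<le> i \<and> i \<le> n - 1 \<longrightarrow> cs!i \<in> hadd (tneg (tmul (TR True r) (ds!i))) (ds!(i-1))"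
    and cn: "cs!n = ds!(n-1)"
    unfolding in_lin_mult_def Let_def n_def by auto
  have "cs \<noteq> []" using lcs by auto
  then have "last cs = cs!n" using lcs by (simp add: last_conv_nth)
  then have dn: "ds!(n-1) \<noteq> TInf" using lc cn by simp
  have "\<exists>i<length ds. ds!i \<noteq> TInf" using dn n1 n_def by (intro exI[of _ "n-1"]) auto
  then obtain m where mA: "\<forall>i<length ds. vge m (T ds r i)" and mB: "\<exists>i<length ds. sgl m (T ds r i) \<noteq> 0"
    using exists_level by blast
  define Q where "Q = map (\<lambda>i. sgl m (T ds r i)) [0..<n]"
  have initQ: "initial_form r ds = Q" using init_eq[OF mA mB] n_def Q_def by simp
  define D where "D = m + r"
  define u where "u i = tsc (ds!i) (real (Suc i) * r)" for i
  have uT: "u i = tsc (T ds r i) r" for i unfolding u_def T_def by (simp add: algebra_simps)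
  define ue where "ue j = (if j = 0 \<or> n < j then TInf else u (j-1))" for j
  have vue: "vge D (ue j)" for j
    using mA n_def unfolding ue_def uT D_def by auto
  have sue: "sgl D (ue j) = (if j = 0 \<or> n < j then 0 else Q!(j-1))" for j
    unfolding ue_def uT D_def Q_def by auto
  have rel: "T cs r i \<in> hadd (tneg (ue (Suc i))) (ue i)" if "i \<le> n" for i
  proof -
    have "i = 0 \<or> (i = n \<and> i \<noteq> 0) \<or> (1 \<le> i \<and> i \<le> n - 1)" using that by linarith
    then consider "i = 0" | "i = n" "i \<noteq> 0" | "1 \<le> i" "i \<le> n - 1" by blast
    then show ?thesis
    proof cases
      case 1
      have "T cs r 0 = tneg (u 0)" unfolding T_def u_def using c0 by (simp add: tmul_one_left)
      then show ?thesis using 1 n1 unfolding ue_def by simp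
    next
      case 2
      have "T cs r n = u (n-1)" unfolding T_def u_def using cn 2 by simp
      then show ?thesis using 2 unfolding ue_def by simp
    next
      case 3
      have "cs!i \<in> hadd (tneg (tsc (ds!i) r)) (ds!(i-1))" using cm 3 by (simp add: tmul_one_left)
      then have "T cs r i \<in> (\<lambda>z. tsc z (real i * r)) ` hadd (tneg (tsc (ds!i) r)) (ds!(i-1))"
        unfolding T_def by blast
      also have "\<dots> = hadd (tsc (tneg (tsc (ds!i) r)) (real i * r)) (tsc (ds!(i-1)) (real i * r))"
        by (rule hadd_tsc[symmetric])
      also have "tsc (tneg (tsc (ds!i) r)) (real i * r) = tneg (u i)"
        unfolding u_def by (simp add: algebra_simps)
      also have "tsc (ds!(i-1)) (real i * r) = u (i - 1)"
        unfolding u_def using 3 by (simp add: of_nat_diff)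
      finally show ?thesis using 3 n1 unfolding ue_def by auto
    qed
  qed
  define P where "P = map (\<lambda>i. sgl D (T cs r i)) [0..<n+1]"
  have loc: "vge D (T cs r i) \<and> sgl D (T cs r i) \<in> sadd (- sgl D (ue (Suc i))) (sgl D (ue i))" if "i \<le> n" for i
    using hadd_vge[OF _ vue rel[OF that]] vue[of "Suc i"] by simp
  have lQ: "length Q = n" unfolding Q_def by simp
  have "relS 0 Q P"
  proof (rule relS_idx)
    show "length P = length Q + 1" unfolding P_def lQ by simp
    show "\<forall>i\<le>length Q. P ! i \<in> sadd (- ((Q @ [0]) ! i)) ((0 # Q) ! i)"
    proof (intro allI impI)
      fix i assume i: "i \<le> length Q"
      have e1: "(Q @ [0]) ! i = sgl D (ue (Suc i))" using i lQ sue[of "Suc i"]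
        by (cases "i < n") (auto simp: nth_append)
      have e2: "(0 # Q) ! i = sgl D (ue i)" using i lQ sue[of i]
        by (cases i) auto
      have e3: "P ! i = sgl D (T cs r i)" unfolding P_def using i lQ
        by (simp del: upt_Suc add: nth_map_upt)
      show "P ! i \<in> sadd (- ((Q @ [0]) ! i)) ((0 # Q) ! i)"
        unfolding e1 e2 e3 using loc i lQ by simp
    qed
  qed
  moreover have "set Q \<subseteq> {-1,0,1}" "set P \<subseteq> {-1,0,1}" unfolding Q_def P_def using sgl_range by auto
  moreover have "\<exists>q\<in>set Q. q \<noteq> 0" using mB n_def unfolding Q_def by auto
  ultimately have key: "scf 0 Q + 1 \<le> scf 0 P"
    using relS_scf[of 0 Q P 0 0] by simp
  then have "\<exists>x\<in>set P. x \<noteq> 0" using scf_pos_nz by simp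
  then have Pb: "\<exists>i<length cs. sgl D (T cs r i) \<noteq> 0" unfolding P_def lcs by (auto simp del: upt_Suc)
  have Pa: "\<forall>i<length cs. vge D (T cs r i)" using loc lcs by simp
  have "initial_form r cs = P" using init_eq[OF Pa Pb] unfolding P_def lcs by simp
  then show ?thesis using key initQ by (simp add: sign_changes_scf)
qed

fun fwd :: "(nat \<Rightarrow> tr) \<Rightarrow> nat \<Rightarrow> tr" where
  "fwd t 0 = t 0"
| "fwd t (Suc i) = (if tle (t (Suc i)) (fwd t i) then t (Suc i) else fwd t i)"

fun bk :: "(nat \<Rightarrow> tr) \<Rightarrow> nat \<Rightarrow> nat \<Rightarrow> tr" where
  "bk t n 0 = TInf"
| "bk t n (Suc k) = (if \<not> tle (bk t n k) (t (n - k)) then t (n - k) else bk t n k)"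

definition wv :: "(nat \<Rightarrow> tr) \<Rightarrow> nat \<Rightarrow> nat \<Rightarrow> tr" where
  "wv t n j = bk t n (n - j)"

lemma wv_n[simp]: "wv t n n = TInf"
  by (simp add: wv_def)

lemma wv_step: "j < n \<Longrightarrow> wv t n j = (if \<not> tle (wv t n (Suc j)) (t (Suc j)) then t (Suc j) else wv t n (Suc j))"
proof -
  assume j: "j < n"
  have e: "n - j = Suc (n - Suc j)" using j by simp
  have e2: "n - (n - Suc j) = Suc j" using j by simp
  show ?thesis unfolding wv_def e by (simp only: bk.simps e2)
qed

lemma tle_total: "\<not> tle x y \<Longrightarrow> tle y x"
  by (cases x; cases y) auto

lemma tle_tneg_right[simp]: "tle x (tneg y) = tle x y"
  by (cases x; cases y) auto

lemma tle_tneg_left[simp]: "tle (tneg x) y = tle x y"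
  by (cases x; cases y) auto

lemma tle_lvl: "sgl C x \<noteq> 0 \<Longrightarrow> vge C y \<Longrightarrow> tle x y"
  by (cases x; cases y) (auto split: if_splits)

lemma not_tle_lvl: "vgt C y \<Longrightarrow> sgl C x \<noteq> 0 \<Longrightarrow> \<not> tle y x"
  by (cases x; cases y) (auto split: if_splits)

lemma tle_vgt: "vgt C x \<Longrightarrow> tle x f \<Longrightarrow> vgt C f"
  by (cases x; cases f) auto

lemma vgt_sgl: "vgt C x \<Longrightarrow> sgl C x = 0"
  by (cases x) auto

lemma vgt_vge: "vgt C x \<Longrightarrow> vge C x"
  by (cases x) auto

lemma vge_sgl0_vgt: "vge C x \<Longrightarrow> sgl C x = 0 \<Longrightarrow> vgt C x"
  by (cases x) (auto split: if_splits)

lemma lastnz_snoc: "lastnz s (xs @ [x]) = (if x = 0 then lastnz s xs else x)"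
  by (induction xs arbitrary: s) auto

lemma fwd_props:
  "(\<forall>k \<le> i. vge C (t k)) \<Longrightarrow>
   vge C (fwd t i) \<and> sgl C (fwd t i) = lastnz 0 (map (\<lambda>k. sgl C (t k)) [0..<Suc i])"
proof (induction i)
  case 0
  then show ?case by simp
next
  case (Suc i)
  then have IH: "vge C (fwd t i)" "sgl C (fwd t i) = lastnz 0 (map (\<lambda>k. sgl C (t k)) [0..<Suc i])"
    by auto
  have vx: "vge C (t (Suc i))" using Suc.prems by auto
  have ex: "map (\<lambda>k. sgl C (t k)) [0..<Suc (Suc i)] = map (\<lambda>k. sgl C (t k)) [0..<Suc i] @ [sgl C (t (Suc i))]"
    by simp
  show ?case
  proof (cases "sgl C (t (Suc i)) = 0")
    case False
    then have "tle (t (Suc i)) (fwd t i)" using tle_lvl IH(1) by blast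
    then show ?thesis using False vx unfolding ex by (simp del: upt_Suc add: lastnz_snoc)
  next
    case True
    then have xg: "vgt C (t (Suc i))" using vx vge_sgl0_vgt by blast
    show ?thesis
    proof (cases "tle (t (Suc i)) (fwd t i)")
      case tl: True
      then have "sgl C (fwd t i) = 0" using tle_vgt[OF xg] vgt_sgl by blast
      then show ?thesis using True tl vx IH unfolding ex by (simp del: upt_Suc add: lastnz_snoc)
    next
      case tl: False
      then show ?thesis using True IH unfolding ex by (simp del: upt_Suc add: lastnz_snoc)
    qed
  qed
qed

lemma wv_nonInf: "t n \<noteq> TInf \<Longrightarrow> j < n \<Longrightarrow> wv t n j \<noteq> TInf"
proof -
  assume tn: "t n \<noteq> TInf" and j: "j < n"
  have "j \<le> n - 1" using j by simp
  then show ?thesis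
  proof (induction j rule: inc_induct)
    case base
    have "n - 1 < n" using j by simp
    then show ?case using wv_step[of "n-1" n t] tn j by (cases "t n") auto
  next
    case (step m)
    then have "m < n" by simp
    then show ?case using wv_step[of m n t] step.IH by (cases "t (Suc m)") auto
  qed
qed

lemma wv_vgt:
  assumes "\<forall>k. L < k \<and> k \<le> n \<longrightarrow> vgt C (t k)" "L \<le> j" "j \<le> n"
  shows "vgt C (wv t n j)"
  using assms(3)
proof (induction j rule: inc_induct)
  case base then show ?case by simp
next
  case (step m)
  then show ?case using wv_step[of m n t] assms(1,2) by auto
qed

lemma wv_L:
  assumes vg: "\<forall>k. L < k \<and> k \<le> n \<longrightarrow> vgt C (t k)" and Ln: "L \<le> n"
    and tL: "sgl C (t L) \<noteq> 0" and va: "\<forall>k\<le>n. vge C (t k)" and j: "j < L"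
  shows "wv t n j = t L"
proof -
  have "j \<le> L - 1" using j by simp
  then show ?thesis
  proof (induction j rule: inc_induct)
    case base
    have "vgt C (wv t n L)" using wv_vgt[OF vg order.refl Ln] .
    then have "\<not> tle (wv t n L) (t L)" using not_tle_lvl tL by blast
    moreover have "L - 1 < n" "Suc (L - 1) = L" using j Ln by auto
    ultimately show ?case using wv_step[of "L-1" n t] by simp
  next
    case (step m)
    have m: "m < n" "Suc m \<le> n" using step Ln by auto
    have "tle (t L) (t (Suc m))" using tle_lvl[OF tL] va m by blast
    then show ?case using wv_step[OF m(1), of t] step.IH by simp
  qed
qed

lemma scf_run:
  "scf s (map (\<lambda>i. lastnz s (take (Suc i) xs)) [0..<length xs]) = scf s xs \<and>
   lastnz s (map (\<lambda>i. lastnz s (take (Suc i) xs)) [0..<length xs]) = lastnz s xs"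
proof (induction xs arbitrary: s)
  case Nil then show ?case by simp
next
  case (Cons x xs)
  define s' where "s' = (if x = 0 then s else x)"
  have e: "map (\<lambda>i. lastnz s (take (Suc i) (x # xs))) [0..<length (x # xs)] =
        s' # map (\<lambda>i. lastnz s' (take (Suc i) xs)) [0..<length xs]"
    unfolding s'_def by (simp add: map_upt_Suc del: upt_Suc)
  show ?case unfolding e using Cons.IH[of s'] unfolding s'_def by auto
qed

lemma scf_neg: "scf (-s) (map uminus xs) = scf s xs \<and> lastnz (-s) (map uminus xs) = - lastnz s xs"
  by (induction xs arbitrary: s) auto

lemma scf_one: "set xs \<subseteq> {0,\<sigma>} \<Longrightarrow> \<sigma> \<in> set xs \<Longrightarrow> \<sigma> \<noteq> 0 \<Longrightarrow>
   scf s' xs = (if s' \<noteq> 0 \<and> s' \<noteq> \<sigma> then 1 else 0)"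
proof (induction xs arbitrary: s')
  case Nil then show ?case by simp
next
  case (Cons x xs)
  show ?case
  proof (cases "x = 0")
    case True then show ?thesis using Cons by auto
  next
    case False
    then have "x = \<sigma>" using Cons.prems by auto
    moreover have "scf \<sigma> xs = 0" using Cons.prems by (intro scf_const) auto
    ultimately show ?thesis using Cons.prems by simp
  qed
qed

lemma tsc_inj: "tsc x k = tsc y k \<Longrightarrow> x = y"
  by (cases x; cases y) auto

lemma tsc_cancel: "tsc (tsc x a) b = x" if "a + b = 0"
  using that by simp

lemma cs_T: "cs ! i = tsc (T cs r i) (- (real i * r))"
  unfolding T_def by simp

lemma lin_mult_intro:
  assumes ld: "length ds = n" and n1: "n \<ge> 1" and lc: "length cs = n + 1"
    and R: "\<forall>i \<le> n. T cs r i \<in> hadd (tneg (ue (Suc i))) (ue i)"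
    and ue: "\<forall>j. ue j = (if j = 0 \<or> n < j then TInf else tsc (ds!(j-1)) (real j * r))"
  shows "in_lin_mult cs (TR True r) ds"
proof -
  have c0: "cs ! 0 = tneg (tmul (TR True r) (ds ! 0))"
  proof -
    have "T cs r 0 \<in> hadd (tneg (ue 1)) (ue 0)" using R by simp
    moreover have "ue 1 = tsc (ds!0) r" "ue 0 = TInf" using ue n1 by auto
    ultimately have "T cs r 0 = tneg (tsc (ds!0) r)" by simp
    then show ?thesis using cs_T[of cs 0 r] by (simp add: tmul_one_left)
  qed
  have cm: "cs ! i \<in> hadd (tneg (tmul (TR True r) (ds ! i))) (ds ! (i - 1))" if i: "1 \<le> i" "i \<le> n - 1" for i
  proof -
    have "T cs r i \<in> hadd (tneg (ue (Suc i))) (ue i)" using R i by simp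
    moreover have "ue (Suc i) = tsc (ds!i) (real (Suc i) * r)" "ue i = tsc (ds!(i-1)) (real i * r)"
      using ue i by auto
    ultimately have "T cs r i \<in> hadd (tneg (tsc (ds!i) (real (Suc i) * r))) (tsc (ds!(i-1)) (real i * r))"
      by simp
    then have "tsc (T cs r i) (- (real i * r)) \<in> (\<lambda>z. tsc z (- (real i * r))) `
       hadd (tneg (tsc (ds!i) (real (Suc i) * r))) (tsc (ds!(i-1)) (real i * r))" by blast
    also have "\<dots> = hadd (tsc (tneg (tsc (ds!i) (real (Suc i) * r))) (- (real i * r)))
                         (tsc (tsc (ds!(i-1)) (real i * r)) (- (real i * r)))"
      by (rule hadd_tsc[symmetric])
    also have "tsc (tneg (tsc (ds!i) (real (Suc i) * r))) (- (real i * r)) = tneg (tsc (ds!i) r)"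
      by (simp add: algebra_simps)
    also have "tsc (tsc (ds!(i-1)) (real i * r)) (- (real i * r)) = ds!(i-1)"
      by simp
    finally show ?thesis using cs_T[of cs i r] by (simp add: tmul_one_left)
  qed
  have cn: "cs ! n = ds ! (n - 1)"
  proof -
    have "T cs r n \<in> hadd (tneg (ue (Suc n))) (ue n)" using R by simp
    moreover have "ue (Suc n) = TInf" "ue n = tsc (ds!(n-1)) (real n * r)" using ue n1 by auto
    ultimately have "T cs r n = tsc (ds!(n-1)) (real n * r)" by simp
    then show ?thesis unfolding T_def by (rule tsc_inj)
  qed
  show ?thesis unfolding in_lin_mult_def Let_def ld using n1 lc c0 cm cn by auto
qed

lemma lvl_neg: "sgl C x = - sgl C y \<Longrightarrow> sgl C y \<noteq> 0 \<Longrightarrow> x = tneg y"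
  by (cases x; cases y) (auto split: if_splits)

lemma dir_b:
  assumes ne: "cs \<noteq> []" and lc: "last cs \<noteq> TInf" and rt: "is_root cs (TR True r)"
  shows "\<exists>ds. in_lin_mult cs (TR True r) ds \<and>
              sign_changes (initial_form r ds) + 1 = sign_changes (initial_form r cs)"
proof -
  define n where "n = length cs - 1"
  have lcs: "length cs = n + 1" using ne n_def by simp
  have csn: "cs!n \<noteq> TInf" using lc ne by (simp add: last_conv_nth n_def)
  define t where "t = T cs r"
  have tn: "t n \<noteq> TInf" using csn unfolding t_def T_def by simp
  have "\<exists>i<length cs. cs ! i \<noteq> TInf" using csn lcs by (intro exI[of _ n]) auto
  then obtain C where vC: "\<forall>i<length cs. vge C (T cs r i)" and lC: "\<exists>i<length cs. sgl C (T cs r i) \<noteq> 0"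
    using exists_level by blast
  define P where "P i = sgl C (t i)" for i
  have initP: "initial_form r cs = map P [0..<n+1]" using init_eq[OF vC lC] lcs unfolding P_def t_def by simp
  have both: "1 \<in> set (map P [0..<n+1]) \<and> -1 \<in> set (map P [0..<n+1])"
    using root_iff[OF vC lC] rt lcs unfolding P_def t_def by simp
  have Pr: "P i \<in> {-1,0,1}" for i unfolding P_def by (rule sgl_range)
  have vall: "\<forall>k\<le>n. vge C (t k)" using vC lcs unfolding t_def by auto
  define Ls where "Ls = {i. i \<le> n \<and> P i \<noteq> 0}"
  have Lsf: "finite Ls" unfolding Ls_def by simp
  have Lsne: "Ls \<noteq> {}" using both unfolding Ls_def by (fastforce simp del: upt_Suc)
  define L where "L = Max Ls"
  have "L \<in> Ls" unfolding L_def using Lsf Lsne by simp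
  then have Ln: "L \<le> n" and PL: "P L \<noteq> 0" unfolding Ls_def by auto
  have Lmax: "i \<le> L" if "i \<le> n" "P i \<noteq> 0" for i
    unfolding L_def using Lsf that by (intro Max_ge) (auto simp: Ls_def)
  define \<sigma> where "\<sigma> = P L"
  have sig: "\<sigma> = 1 \<or> \<sigma> = -1" using PL Pr[of L] unfolding \<sigma>_def by auto
  define Hs where "Hs = {i. i \<le> n \<and> P i = -\<sigma>}"
  have Hsf: "finite Hs" unfolding Hs_def by simp
  obtain i1 i2 where i12: "i1 \<le> n" "P i1 = 1" "i2 \<le> n" "P i2 = -1"
  proof -
    from both obtain i1 where "i1 < n + 1" "P i1 = 1" by (auto simp del: upt_Suc)
    moreover from both obtain i2 where "i2 < n + 1" "P i2 = -1" by (auto simp del: upt_Suc)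
    ultimately show ?thesis using that[of i1 i2] by simp
  qed
  have Hsne: "Hs \<noteq> {}"
  proof (cases "\<sigma> = 1")
    case True then show ?thesis using i12 unfolding Hs_def by auto
  next
    case False then have "\<sigma> = -1" using sig by simp
    then show ?thesis using i12 unfolding Hs_def by auto
  qed
  define h where "h = Max Hs"
  have "h \<in> Hs" unfolding h_def using Hsf Hsne by simp
  then have hn: "h \<le> n" and Ph: "P h = -\<sigma>" unfolding Hs_def by auto
  have hmax: "i \<le> h" if "i \<le> n" "P i = -\<sigma>" for i
    unfolding h_def using Hsf that by (intro Max_ge) (auto simp: Hs_def)
  have hL: "h < L"
  proof -
    have "h \<le> L" using Lmax[OF hn] Ph sig by auto
    moreover have "h \<noteq> L" using Ph sig unfolding \<sigma>_def by auto
    ultimately show ?thesis by simp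
  qed
  have n1: "n \<ge> 1" using hL Ln by simp
  have hn': "h < n" using hL Ln by simp
  have after: "P k = 0" if "L < k" "k \<le> n" for k using Lmax that by force
  have mid: "P k \<in> {0,\<sigma>}" if "h < k" "k \<le> n" for k
    using hmax[of k] that Pr[of k] sig by auto
  have vgtL: "\<forall>k. L < k \<and> k \<le> n \<longrightarrow> vgt C (t k)"
    using after vall vge_sgl0_vgt unfolding P_def by blast
  have tLl: "sgl C (t L) \<noteq> 0" using PL unfolding P_def .
  have wL: "wv t n j = t L" if "j < L" for j using wv_L[OF vgtL Ln tLl vall that] .
  have fw: "vge C (fwd t i) \<and> sgl C (fwd t i) = lastnz 0 (map P [0..<Suc i])" if "i \<le> n" for i
    using fwd_props[of i C t] vall that unfolding P_def by auto
  define u where "u i = (if i < h then tneg (fwd t i) else wv t n i)" for i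
  define ds where "ds = map (\<lambda>i. tsc (u i) (- (real (Suc i) * r))) [0..<n]"
  define ue where "ue j = (if j = 0 \<or> n < j then TInf else tsc (ds!(j-1)) (real j * r))" for j
  have ue_u: "ue j = (if j = 0 \<or> n < j then TInf else u (j-1))" for j
  proof (cases "j = 0 \<or> n < j")
    case False
    then have "ds!(j-1) = tsc (u (j-1)) (- (real j * r))" unfolding ds_def by auto
    then show ?thesis using False unfolding ue_def by simp
  qed (simp add: ue_def)
  have R: "\<forall>i \<le> n. T cs r i \<in> hadd (tneg (ue (Suc i))) (ue i)"
  proof (intro allI impI)
    fix i assume i: "i \<le> n"
    show "T cs r i \<in> hadd (tneg (ue (Suc i))) (ue i)"
    proof -
      consider "i < h" | "i = h" | "h < i" "i < n" | "i = n" using i hn' by linarith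
      then have "t i \<in> hadd (tneg (ue (Suc i))) (ue i)"
      proof cases
        case 1
        then have e1: "ue (Suc i) = tneg (fwd t i)" using hn' unfolding ue_u u_def by auto
        show ?thesis
        proof (cases i)
          case 0
          then show ?thesis using e1 unfolding ue_u by simp
        next
          case (Suc k)
          have e2: "ue i = tneg (fwd t k)" using Suc 1 hn' unfolding ue_u u_def by auto
          show ?thesis
          proof (cases "tle (t i) (fwd t k)")
            case True
            then have "fwd t i = t i" using Suc by simp
            then show ?thesis using e1 e2 True hadd_self_le[of "t i" "tneg (fwd t k)"] by simp
          next
            case False
            then have "fwd t i = fwd t k" using Suc by simp
            moreover have "fwd t k \<noteq> TInf" using False by auto
            moreover have "tle (fwd t k) (t i)" using False tle_total by blast
            ultimately show ?thesis using e1 e2 hadd_cancel[of "fwd t k" "t i"] hadd_comm by simp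
          qed
        qed
      next
        case 2
        have e1: "ue (Suc i) = t L" using 2 hn' hL wL unfolding ue_u u_def by auto
        have vh: "vge C (ue i)"
        proof (cases "i = 0")
          case False
          then have "ue i = tneg (fwd t (i-1))" using 2 hn' unfolding ue_u u_def by auto
          then show ?thesis using fw[of "i-1"] i by simp
        qed (simp add: ue_u)
        have "sgl C (t h) = - sgl C (t L)" using Ph unfolding P_def \<sigma>_def .
        then have th: "t h = tneg (t L)" using lvl_neg tLl by blast
        have "sgl C (t h) \<noteq> 0" using Ph sig unfolding P_def by auto
        then have "tle (t h) (ue i)" using tle_lvl vh by blast
        then show ?thesis using e1 th 2 hadd_self_le by simp
      next
        case 3
        have e1: "ue (Suc i) = wv t n i" using 3 unfolding ue_u u_def by auto
        have e2: "ue i = wv t n (i - 1)" using 3 unfolding ue_u u_def by auto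
        have st: "wv t n (i-1) = (if \<not> tle (wv t n i) (t i) then t i else wv t n i)"
          using wv_step[of "i-1" n t] 3 by simp
        show ?thesis
        proof (cases "tle (wv t n i) (t i)")
          case False
          then have "tle (t i) (wv t n i)" using tle_total by blast
          then have "t i \<in> hadd (t i) (tneg (wv t n i))" using hadd_self_le by simp
          then show ?thesis using e1 e2 st False hadd_comm by simp
        next
          case True
          have "wv t n i \<noteq> TInf" using wv_nonInf[of t n i, OF tn] 3 by simp
          then show ?thesis using e1 e2 st True hadd_cancel by simp
        qed
      next
        case 4
        have e1: "ue (Suc i) = TInf" using 4 unfolding ue_u by simp
        have e2: "ue i = wv t n (n - 1)" using 4 hn' unfolding ue_u u_def by auto
        have "wv t n (n-1) = t n" using wv_step[of "n-1" n t] n1 tn by (cases "t n") auto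
        then show ?thesis using e1 e2 4 by simp
      qed
      then show ?thesis unfolding t_def .
    qed
  qed
  have lds: "length ds = n" unfolding ds_def by simp
  have lm: "in_lin_mult cs (TR True r) ds"
    by (rule lin_mult_intro[OF lds n1 lcs R]) (simp add: ue_def)
  have Tds: "T ds r i = tsc (u i) (-r)" if "i < n" for i
    using that unfolding T_def ds_def by (simp add: algebra_simps)
  have vu: "vge C (u i)" if "i < n" for i
  proof (cases "i < h")
    case True then show ?thesis using fw[of i] that unfolding u_def by simp
  next
    case False
    show ?thesis
    proof (cases "i < L")
      case True then show ?thesis using False wL vall Ln unfolding u_def by simp
    next
      case F2: False
      then show ?thesis using False wv_vgt[OF vgtL, of i] that vgt_vge unfolding u_def by simp
    qed
  qed
  have lu: "sgl C (u h) \<noteq> 0" using wL[OF hL] tLl unfolding u_def by simp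
  have iA: "\<forall>i<length ds. vge (C - r) (T ds r i)" using vu Tds lds by simp
  have iB: "\<exists>i<length ds. sgl (C - r) (T ds r i) \<noteq> 0" using lu Tds lds hn' by (intro exI[of _ h]) simp
  have initQ: "initial_form r ds = map (\<lambda>i. sgl C (u i)) [0..<n]"
    using init_eq[OF iA iB] lds Tds by simp
  define Phl where "Phl = map P [0..<h]"
  define X where "X = map (\<lambda>i. lastnz 0 (take (Suc i) Phl)) [0..<length Phl]"
  have A: "map (\<lambda>i. sgl C (u i)) [0..<h] = map uminus X"
  proof -
    have "sgl C (u i) = - lastnz 0 (take (Suc i) Phl)" if "i < h" for i
    proof -
      have "take (Suc i) Phl = map P [0..<Suc i]" unfolding Phl_def using that by (simp add: take_map)
      then show ?thesis using that fw[of i] hn' unfolding u_def by simp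
    qed
    then show ?thesis unfolding X_def Phl_def by simp
  qed
  define B where "B = map (\<lambda>i. sgl C (u i)) [h..<n]"
  have Bs: "set B \<subseteq> {0,\<sigma>}"
  proof
    fix x assume "x \<in> set B"
    then obtain i where i: "h \<le> i" "i < n" "x = sgl C (u i)" unfolding B_def by auto
    show "x \<in> {0,\<sigma>}"
    proof (cases "i < L")
      case True then show ?thesis using i wL unfolding u_def \<sigma>_def P_def by simp
    next
      case False then show ?thesis using i wv_vgt[OF vgtL, of i] vgt_sgl unfolding u_def by simp
    qed
  qed
  have Bsig: "\<sigma> \<in> set B" using wL[OF hL] hn' unfolding B_def u_def \<sigma>_def P_def by force
  have s0: "\<sigma> \<noteq> 0" using sig by auto
  have Qsplit: "map (\<lambda>i. sgl C (u i)) [0..<n] = map uminus X @ B"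
  proof -
    have "[0..<n] = [0..<h] @ [h..<n]" using hn' by (metis le_add_diff_inverse less_imp_le upt_add_eq_append zero_le)
    then show ?thesis using A unfolding B_def by simp
  qed
  have XR: "scf 0 X = scf 0 Phl" "lastnz 0 X = lastnz 0 Phl" using scf_run[of 0 Phl] unfolding X_def by auto
  have XN: "scf 0 (map uminus X) = scf 0 X" "lastnz 0 (map uminus X) = - lastnz 0 X"
    using scf_neg[of 0 X] by auto
  define l where "l = lastnz 0 Phl"
  have Q: "scf 0 (map (\<lambda>i. sgl C (u i)) [0..<n]) = scf 0 Phl + (if -l \<noteq> 0 \<and> -l \<noteq> \<sigma> then 1 else 0)"
    unfolding Qsplit scf_append XN XR scf_one[OF Bs Bsig s0] l_def by simp
  define Rest where "Rest = map P [Suc h..<n+1]"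
  have Psplit: "map P [0..<n+1] = Phl @ [-\<sigma>] @ Rest"
  proof -
    have e1: "[0..<n+1] = [0..<h] @ [h..<n+1]" using upt_add_eq_append[of 0 h "n+1-h"] hn' by simp
    have e2: "[h..<n+1] = h # [Suc h..<n+1]" using hn' by (simp only: upt_conv_Cons)
    have "map P [0..<n+1] = map P [0..<h] @ [P h] @ map P [Suc h..<n+1]"
      unfolding e1 e2 by (simp del: upt_Suc)
    then show ?thesis unfolding Phl_def Rest_def using Ph by (simp del: upt_Suc)
  qed
  have Rs: "set Rest \<subseteq> {0,\<sigma>}"
  proof
    fix x assume "x \<in> set Rest"
    then obtain k where "Suc h \<le> k" "k < n + 1" "x = P k" unfolding Rest_def by (auto simp del: upt_Suc)
    then show "x \<in> {0,\<sigma>}" using mid[of k] by simp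
  qed
  have Lin: "L \<in> set [Suc h..<n+1]" using hL Ln by (simp del: upt_Suc)
  have Rsig: "\<sigma> \<in> set Rest" unfolding Rest_def \<sigma>_def using Lin by (simp only: set_map) (rule imageI)
  have Pc: "scf 0 (map P [0..<n+1]) = scf 0 Phl + (if l \<noteq> 0 \<and> -\<sigma> \<noteq> l then 1 else 0) + 1"
  proof -
    have "scf (-\<sigma>) Rest = 1" using scf_one[OF Rs Rsig s0, of "-\<sigma>"] sig by auto
    then show ?thesis unfolding Psplit scf_append l_def using sig by auto
  qed
  have "sign_changes (initial_form r ds) + 1 = sign_changes (initial_form r cs)"
    unfolding initQ initP sign_changes_scf Q Pc by auto
  then show ?thesis using lm by blast
qed

lemma lin_mult_props:
  assumes "in_lin_mult cs a ds"
  shows "length cs = length ds + 1" "ds \<noteq> []" "last ds = last cs"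
proof -
  from assms have n1: "length ds \<ge> 1" and lc: "length cs = length ds + 1"
    and cn: "cs ! length ds = ds ! (length ds - 1)"
    unfolding in_lin_mult_def Let_def by auto
  show "length cs = length ds + 1" by (rule lc)
  show "ds \<noteq> []" using n1 by auto
  have "cs \<noteq> []" using lc by auto
  then have "last cs = cs ! length ds" using lc by (simp add: last_conv_nth)
  moreover have "last ds = ds ! (length ds - 1)" using \<open>ds \<noteq> []\<close> by (simp add: last_conv_nth)
  ultimately show "last ds = last cs" using cn by simp
qed

lemma main_ind:
  "\<forall>cs. length cs = k \<longrightarrow> cs \<noteq> [] \<longrightarrow> last cs \<noteq> TInf \<longrightarrow>
     mult_aux k (TR True r) cs = sign_changes (initial_form r cs)"
proof (induction k)
  case 0
  then show ?case by simp
next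
  case (Suc k)
  show ?case
  proof (intro allI impI)
    fix cs :: "tr list"
    assume len: "length cs = Suc k" and ne: "cs \<noteq> []" and lc: "last cs \<noteq> TInf"
    have "\<exists>i<length cs. cs ! i \<noteq> TInf" using lc ne len
      by (intro exI[of _ k]) (auto simp: last_conv_nth)
    then obtain C where vC: "\<forall>i<length cs. vge C (T cs r i)" and lC: "\<exists>i<length cs. sgl C (T cs r i) \<noteq> 0"
      using exists_level by blast
    show "mult_aux (Suc k) (TR True r) cs = sign_changes (initial_form r cs)"
    proof (cases "is_root cs (TR True r)")
      case False
      have "initial_form r cs = map (\<lambda>i. sgl C (T cs r i)) [0..<length cs]" by (rule init_eq[OF vC lC])
      moreover have "\<not> (1 \<in> set (map (\<lambda>i. sgl C (T cs r i)) [0..<length cs]) \<and>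
                      -1 \<in> set (map (\<lambda>i. sgl C (T cs r i)) [0..<length cs]))"
        using root_iff[OF vC lC] False by simp
      moreover have "set (map (\<lambda>i. sgl C (T cs r i)) [0..<length cs]) \<subseteq> {-1,0,1}"
        using sgl_range by auto
      ultimately have "sign_changes (initial_form r cs) = 0"
        using scf_notboth by (simp add: sign_changes_scf)
      then show ?thesis using False by simp
    next
      case True
      define Ds where "Ds = {ds. in_lin_mult cs (TR True r) ds}"
      define N where "N = sign_changes (initial_form r cs)"
      have im: "mult_aux k (TR True r) ` Ds = (\<lambda>ds. sign_changes (initial_form r ds)) ` Ds"
      proof (rule image_cong[OF refl])
        fix ds assume "ds \<in> Ds"
        then have lm: "in_lin_mult cs (TR True r) ds" unfolding Ds_def by simp
        have "length ds = k" using lin_mult_props(1)[OF lm] len by simp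
        then show "mult_aux k (TR True r) ds = sign_changes (initial_form r ds)"
          using Suc.IH lin_mult_props(2,3)[OF lm] lc by simp
      qed
      obtain ds0 where d0: "in_lin_mult cs (TR True r) ds0"
        "sign_changes (initial_form r ds0) + 1 = N"
        using dir_b[OF ne lc True] unfolding N_def by blast
      have ub: "\<forall>y\<in>(\<lambda>ds. sign_changes (initial_form r ds)) ` Ds. y \<le> N - 1"
      proof
        fix y assume "y \<in> (\<lambda>ds. sign_changes (initial_form r ds)) ` Ds"
        then obtain ds where ds: "ds \<in> Ds" "y = sign_changes (initial_form r ds)" by blast
        then have "in_lin_mult cs (TR True r) ds" unfolding Ds_def by simp
        then have "y + 1 \<le> N" using dir_a[OF _ lc] ds(2) unfolding N_def by blast
        then show "y \<le> N - 1" by simp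
      qed
      have mem: "N - 1 \<in> (\<lambda>ds. sign_changes (initial_form r ds)) ` Ds"
      proof (rule image_eqI)
        show "N - 1 = sign_changes (initial_form r ds0)" using d0(2) by simp
        show "ds0 \<in> Ds" using d0(1) unfolding Ds_def by simp
      qed
      have fin: "finite ((\<lambda>ds. sign_changes (initial_form r ds)) ` Ds)"
      proof (rule finite_subset[of _ "{..N - 1}"])
        show "(\<lambda>ds. sign_changes (initial_form r ds)) ` Ds \<subseteq> {..N - 1}"
          using ub by (meson atMost_iff subsetI)
      qed simp
      have mx: "Max ((\<lambda>ds. sign_changes (initial_form r ds)) ` Ds) = N - 1"
        using fin ub mem by (intro Max_eqI) auto
      have "mult_aux (Suc k) (TR True r) cs = Suc (Max (mult_aux k (TR True r) ` Ds))"
        using True unfolding Ds_def by simp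
      also have "\<dots> = Suc (N - 1)" unfolding im mx ..
      also have "\<dots> = N" using d0(2) by simp
      finally show ?thesis unfolding N_def .
    qed
  qed
qed

theorem theoremA:
  fixes cs :: "tr list" and r :: real
  assumes "cs \<noteq> []"
    and "last cs \<noteq> TInf"
    and "is_root cs (TR True r)"
  shows "mult (TR True r) cs = sign_changes (initial_form r cs)"
  using main_ind[of "length cs" r] assms unfolding mult_def by simp

end
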